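(* Let $\mathcal{C}$ be a small category in which no composite of non-identity morphisms is an identity, and let $M,N$ be $k\mathcal{C}$-modules such that $X=[M]-[N]$ satisfies $d^0X=0$, i.e. $\partial_0^*M\oplus\partial_1^*N\cong\partial_0^*N\oplus\partial_1^*M$ as $k\mathcal{G}^{\mathcal{C}}_1$-modules. Then for each line-component $\mathcal{M}$ of $\mathcal{C}$, the function $\operatorname{rk}X$ is constant on the morphisms in $\mathcal{M}$, and it is constant on the set of identity morphisms $1_x$ of the objects $x$ that are domains or codomains of morphisms in $\mathcal{M}$.
   Context: A $k\mathcal{C}$-module is a functor from $\mathcal{C}$ to finite-dimensional $k$-vector spaces ($k$ a field). For $X=[M]-[N]$ in the split Grothendieck group and a morphism $\varphi$ of $\mathcal{C}$, the rank invariant is $\operatorname{rk}X(\varphi)=\operatorname{rank}M(\varphi)-\operatorname{rank}N(\varphi)$ (so $\operatorname{rk}X(1_x)=\dim M(x)-\dim N(x)$). $\mathcal{G}^{\mathcal{C}}_1$ is the category whose objects are the non-identity morphisms $u:a\to b$ of $\mathcal{C}$ (written $[u]$); its morphisms $[u]\to[v]$ ($v:c\to d$) are identities and the pairs $(w\circ u,\;v\circ w)$ for each $w:b\to c$ in $\mathcal{C}$. The functors $\partial_0,\partial_1:\mathcal{G}^{\mathcal{C}}_1\to\mathcal{C}$ are $\partial_0[u]=b$, $\partial_0(f_0,f_1)=f_1$, $\partial_1[u]=a$, $\partial_1(f_0,f_1)=f_0$, and $d^0=\partial_0^*-\partial_1^*$ with $F^*M=M\circ F$. A set of non-identity morphisms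 of $\mathcal{C}$ is a line-component if the full subcategory of $\mathcal{G}^{\mathcal{C}}_1$ on it is a connected component of $\mathcal{G}^{\mathcal{C}}_1$. *)

theory Defs
  imports "Jordan_Normal_Form.DL_Rank"
begin

text \<open>A small category: object set, morphism set, domain, codomain, identities
and composition (Comp g f = g o f, defined when Dom g = Cod f).\<close>

record ('o, 'm) cat =
  Obj  :: "'o set"
  Mor  :: "'m set"
  Dom  :: "'m \<Rightarrow> 'o"
  Cod  :: "'m \<Rightarrow> 'o"
  Id   :: "'o \<Rightarrow> 'm"
  Comp :: "'m \<Rightarrow> 'm \<Rightarrow> 'm"

definition category :: "('o, 'm) cat \<Rightarrow> bool" where
  "category C \<longleftrightarrow>
     (\<forall>f\<in>Mor C. Dom C f \<in> Obj C \<and> Cod C f \<in> Obj C) \<and>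
     (\<forall>x\<in>Obj C. Id C x \<in> Mor C \<and> Dom C (Id C x) = x \<and> Cod C (Id C x) = x) \<and>
     (\<forall>f\<in>Mor C. \<forall>g\<in>Mor C. Dom C g = Cod C f \<longrightarrow>
        Comp C g f \<in> Mor C \<and> Dom C (Comp C g f) = Dom C f \<and> Cod C (Comp C g f) = Cod C g) \<and>
     (\<forall>f\<in>Mor C. Comp C (Id C (Cod C f)) f = f \<and> Comp C f (Id C (Dom C f)) = f) \<and>
     (\<forall>f\<in>Mor C. \<forall>g\<in>Mor C. \<forall>h\<in>Mor C. Dom C g = Cod C f \<longrightarrow> Dom C h = Cod C g \<longrightarrow>
        Comp C h (Comp C g f) = Comp C (Comp C h g) f)"

text \<open>Non-identity morphisms (the objects of G_1).\<close>
definition nonid :: "('o, 'm) cat \<Rightarrow> 'm \<Rightarrow> bool" where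
  "nonid C u \<longleftrightarrow> u \<in> Mor C \<and> u \<notin> Id C ` Obj C"

text \<open>A kC-module: a functor from C to finite-dimensional k-vector spaces, given
(after choosing bases) by a dimension function d and a matrix for each morphism.\<close>
definition kC_module :: "('o, 'm) cat \<Rightarrow> ('o \<Rightarrow> nat) \<Rightarrow> ('m \<Rightarrow> 'k::field mat) \<Rightarrow> bool" where
  "kC_module C d F \<longleftrightarrow>
     (\<forall>f\<in>Mor C. F f \<in> carrier_mat (d (Cod C f)) (d (Dom C f))) \<and>
     (\<forall>x\<in>Obj C. F (Id C x) = 1\<^sub>m (d x)) \<and>
     (\<forall>f\<in>Mor C. \<forall>g\<in>Mor C. Dom C g = Cod C f \<longrightarrow> F (Comp C g f) = F g * F f)"

text \<open>Morphisms [u] \<rightarrow> [v] of G_1 (besides identities) are indexed by w : Cod u \<rightarrow> Dom v,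
given by the pair (w o u, v o w).\<close>
definition g1_hom :: "('o, 'm) cat \<Rightarrow> 'm \<Rightarrow> 'm \<Rightarrow> 'm \<Rightarrow> bool" where
  "g1_hom C u v w \<longleftrightarrow> nonid C u \<and> nonid C v \<and> w \<in> Mor C \<and>
     Dom C w = Cod C u \<and> Cod C w = Dom C v"

text \<open>Pull-back dimension/matrices of d0^* P \<oplus> d1^* Q on G_1:
at [u:a\<rightarrow>b] the space P(b) \<oplus> Q(a); on (w o u, v o w) the block matrix diag(P(v o w), Q(w o u)).\<close>
definition pb_dim :: "('o, 'm) cat \<Rightarrow> ('o \<Rightarrow> nat) \<Rightarrow> ('o \<Rightarrow> nat) \<Rightarrow> 'm \<Rightarrow> nat" where
  "pb_dim C dP dQ u = dP (Cod C u) + dQ (Dom C u)"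

definition pb_mat :: "('o, 'm) cat \<Rightarrow> ('o \<Rightarrow> nat) \<Rightarrow> ('m \<Rightarrow> 'k::field mat)
    \<Rightarrow> ('o \<Rightarrow> nat) \<Rightarrow> ('m \<Rightarrow> 'k mat) \<Rightarrow> 'm \<Rightarrow> 'm \<Rightarrow> 'm \<Rightarrow> 'k mat" where
  "pb_mat C dP P dQ Q u v w =
     four_block_mat (P (Comp C v w)) (0\<^sub>m (dP (Cod C v)) (dQ (Dom C u)))
                    (0\<^sub>m (dQ (Cod C w)) (dP (Cod C u))) (Q (Comp C w u))"

text \<open>d^0 X = 0 for X = [M] - [N]: d0^*M \<oplus> d1^*N \<cong> d0^*N \<oplus> d1^*M as kG_1-modules,
i.e. a natural family of invertible matrices.\<close>
definition d0_vanishes :: "('o, 'm) cat \<Rightarrow> ('o \<Rightarrow> nat) \<Rightarrow> ('m \<Rightarrow> 'k::field mat)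
    \<Rightarrow> ('o \<Rightarrow> nat) \<Rightarrow> ('m \<Rightarrow> 'k mat) \<Rightarrow> bool" where
  "d0_vanishes C dM M dN N \<longleftrightarrow>
     (\<exists>T :: 'm \<Rightarrow> 'k mat.
        (\<forall>u. nonid C u \<longrightarrow>
           pb_dim C dM dN u = pb_dim C dN dM u \<and>
           T u \<in> carrier_mat (pb_dim C dN dM u) (pb_dim C dM dN u) \<and>
           invertible_mat (T u)) \<and>
        (\<forall>u v w. g1_hom C u v w \<longrightarrow>
           T v * pb_mat C dM M dN N u v w = pb_mat C dN N dM M u v w * T u))"

definition mat_rank :: "'k::field mat \<Rightarrow> nat" where
  "mat_rank A = vec_space.rank (dim_row A) A"

definition rk_inv :: "('m \<Rightarrow> 'k::field mat) \<Rightarrow> ('m \<Rightarrow> 'k mat) \<Rightarrow> 'm \<Rightarrow> int" where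
  "rk_inv M N f = int (mat_rank (M f)) - int (mat_rank (N f))"

definition g1_adj :: "('o, 'm) cat \<Rightarrow> 'm \<Rightarrow> 'm \<Rightarrow> bool" where
  "g1_adj C u v \<longleftrightarrow> (\<exists>w. g1_hom C u v w) \<or> (\<exists>w. g1_hom C v u w)"

definition line_component :: "('o, 'm) cat \<Rightarrow> 'm set \<Rightarrow> bool" where
  "line_component C S \<longleftrightarrow> (\<exists>u. nonid C u \<and> S = {v. (g1_adj C)\<^sup>*\<^sup>* u v})"

definition no_id_composites :: "('o, 'm) cat \<Rightarrow> bool" where
  "no_id_composites C \<longleftrightarrow>
     (\<forall>f g. nonid C f \<longrightarrow> nonid C g \<longrightarrow> Dom C g = Cod C f \<longrightarrow> Comp C g f \<notin> Id C ` Obj C)"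

end

theory Submission
  imports Defs "Jordan_Normal_Form.Matrix_Kernel"
begin

lemma mat_rank_nullity:
  fixes A :: "'a::field mat"
  assumes A: "A \<in> carrier_mat nr nc"
  shows "mat_rank A + kernel_dim A = nc"
proof -
  interpret NC: vec_space "TYPE('a)" nc .
  interpret NR: vec_space "TYPE('a)" nr .
  interpret K: kernel nr nc A by (unfold_locales, rule A)
  have hom: "(\<lambda>x. A *\<^sub>v x) \<in> LinearCombinations.module_hom class_ring NC.V NR.V"
    unfolding LinearCombinations.module_hom_def using A
    by (auto simp: mult_add_distrib_mat_vec mult_mat_vec)
  interpret L: linear_map class_ring NC.V NR.V "\<lambda>x. A *\<^sub>v x"
    by (intro linear_map.intro mod_hom.intro) (unfold_locales, rule hom)
  have rn: "vectorspace.dim class_ring (NR.vs L.imT) + vectorspace.dim class_ring (NC.vs L.kerT) = NC.dim"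
    by (rule L.rank_nullity) simp
  have im: "L.imT = NR.span (set (cols A))"
  proof -
    have "NR.span (set (cols A)) = {y \<in> carrier_vec nr. \<exists>x\<in>carrier_vec nc. A *\<^sub>v x = y}"
      using NR.col_space_eq[OF A] A unfolding NR.col_space_def by simp
    then show ?thesis unfolding L.im_def using A by auto
  qed
  have ker: "L.kerT = mat_kernel A"
    unfolding L.ker_def mat_kernel_def using A by auto
  have "mat_rank A = NR.rank A" unfolding mat_rank_def using A by simp
  then show ?thesis using rn A unfolding NR.rank_def im ker NC.dim_is_n kernel_dim_def by simp
qed
lemma mat_kernel_split_gen:
  assumes A: "A \<in> carrier_mat nr1 nc1"
      and D: "D \<in> carrier_mat nr2 nc2"
      and kAD: "k \<in> mat_kernel (four_block_mat A (0\<^sub>m nr1 nc2) (0\<^sub>m nr2 nc1) D)"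
           (is "_ \<in> mat_kernel ?A00D")
  shows "vec_first k nc1 \<in> mat_kernel A" (is "?a \<in> _")
    and "vec_last k nc2 \<in> mat_kernel D" (is "?d \<in> _")
proof -
  have A00D: "?A00D \<in> carrier_mat (nr1+nr2) (nc1+nc2)" using four_block_carrier_mat[OF A D].
  hence k: "k \<in> carrier_vec (nc1+nc2)" using kAD mat_kernel_carrier by auto
  hence ad: "?a @\<^sub>v ?d = k" by simp
  have a: "?a \<in> carrier_vec nc1" and d: "?d \<in> carrier_vec nc2" by auto
  have "0\<^sub>v nr1 @\<^sub>v 0\<^sub>v nr2 = 0\<^sub>v (nr1+nr2)" by auto
  also have "\<dots> = ?A00D *\<^sub>v (?a @\<^sub>v ?d)" using mat_kernelD[OF A00D] kAD ad by auto
  also have "\<dots> = (A *\<^sub>v ?a + 0\<^sub>m nr1 nc2 *\<^sub>v ?d) @\<^sub>v (0\<^sub>m nr2 nc1 *\<^sub>v ?a + D *\<^sub>v ?d)"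
    by (rule four_block_mat_mult_vec[OF A _ _ D a d]) auto
  also have "\<dots> = A *\<^sub>v ?a @\<^sub>v D *\<^sub>v ?d" using A D a d by auto
  finally have "0\<^sub>v nr1 @\<^sub>v 0\<^sub>v nr2 = A *\<^sub>v ?a @\<^sub>v D *\<^sub>v ?d".
  hence "0\<^sub>v nr1 = A *\<^sub>v ?a \<and> 0\<^sub>v nr2 = D *\<^sub>v ?d"
    apply(subst append_vec_eq[of _ nr1, symmetric]) using A D by auto
  thus "?a \<in> mat_kernel A" "?d \<in> mat_kernel D" unfolding mat_kernel_def using A D a d by auto
qed

lemma kernel_four_block_0_mat_gen:
  assumes Adef: "(A :: 'a::field mat) = four_block_mat B (0\<^sub>m nr1 nc2) (0\<^sub>m nr2 nc1) D"
  and B: "B \<in> carrier_mat nr1 nc1"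
  and D: "D \<in> carrier_mat nr2 nc2"
  shows "kernel.dim (nc1 + nc2) A = kernel.dim nc1 B + kernel.dim nc2 D"
proof -
  have [simp]: "nc1 + nc2 = nc2 + nc1" by auto
  have A: "A \<in> carrier_mat (nr1+nr2) (nc1+nc2)"
    using Adef four_block_carrier_mat[OF B D] by auto
  interpret vardim "TYPE('a)".
  interpret MN: vectorspace class_ring "M (nc1+nc2)" using vec_vs.
  interpret KA: kernel "nr1+nr2" "nc1+nc2" A by (unfold_locales, rule A)
  interpret KB: kernel nr1 nc1 B by (unfold_locales, rule B)
  interpret KD: kernel nr2 nc2 D by (unfold_locales, rule D)

  note [simp] = module_vec_simps

  from kernel_basis_exists[OF B]
    obtain baseB where fin_bB: "finite baseB" and bB: "KB.basis baseB" by blast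
  hence bBkB: "baseB \<subseteq> mat_kernel B" unfolding KB.Ker.basis_def by auto
  hence bBc: "baseB \<subseteq> carrier_vec nc1" using mat_kernel_carrier[OF B] by auto
  have bB0: "0\<^sub>v nc1 \<notin> baseB"
    using bB unfolding KB.Ker.basis_def
    using KB.Ker.vs_zero_lin_dep[OF bBkB] by auto
  have bBkA: "padr nc2 ` baseB \<subseteq> mat_kernel A"
  proof
    fix a assume "a \<in> padr nc2 ` baseB"
    then obtain b where ab: "a = padr nc2 b" and "b \<in> baseB" by auto
    hence "b \<in> mat_kernel B" using bB unfolding KB.Ker.basis_def by auto
    hence "padr nc2 b \<in> mat_kernel A"
      unfolding Adef using kernel_padr[OF _ B _ D] by auto
    thus "a \<in> mat_kernel A" using ab by auto
  qed
  from kernel_basis_exists[OF D]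
    obtain baseD where fin_bD: "finite baseD" and bD: "KD.basis baseD" by blast
  hence bDkD: "baseD \<subseteq> mat_kernel D" unfolding KD.Ker.basis_def by auto
  hence bDc: "baseD \<subseteq> carrier_vec nc2" using mat_kernel_carrier[OF D] by auto
  have bDkA: "padl nc1 ` baseD \<subseteq> mat_kernel A"
  proof
    fix a assume "a \<in> padl nc1 ` baseD"
    then obtain d where ad: "a = padl nc1 d" and "d \<in> baseD" by auto
    hence "d \<in> mat_kernel D" using bD unfolding KD.Ker.basis_def by auto
    hence "padl nc1 d \<in> mat_kernel A"
      unfolding Adef using kernel_padl[OF _ B _ D] by auto
    thus "a \<in> mat_kernel A" using ad by auto
  qed
  let ?BD = "(padr nc2 ` baseB \<union> padl nc1 ` baseD)"
  have finBD: "finite ?BD" using fin_bB fin_bD by auto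
  have "KA.basis ?BD"
    unfolding KA.Ker.basis_def
  proof (intro conjI Set.equalityI)
    show BDk: "?BD \<subseteq> mat_kernel A" using bBkA bDkA by auto
    show "mat_kernel A \<subseteq> KA.Ker.span ?BD"
      unfolding KA.span_same[OF BDk]
    proof
      have BD: "?BD \<subseteq> carrier_vec (nc1+nc2)" (is "_ \<subseteq> ?R")
      proof(rule)
        fix v assume "v \<in> ?BD"
        moreover
        { assume "v \<in> padr nc2 ` baseB"
          then obtain b where "b \<in> baseB" and vb: "v = padr nc2 b" by auto
          hence "b \<in> carrier_vec nc1" using bBc by auto
          hence "v \<in> ?R" unfolding vb apply(subst append_carrier_vec) by auto
        }
        moreover
        { assume "v \<in> padl nc1 ` baseD"
          then obtain d where "d \<in> baseD" and vd: "v = padl nc1 d" by auto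
          hence "d \<in> carrier_vec nc2" using bDc by auto
          hence "v \<in> ?R" unfolding vd apply(subst append_carrier_vec) by auto
        }
        ultimately show "v \<in> ?R" by auto
      qed
      fix a assume a: "a \<in> mat_kernel A"
      hence "a \<in> carrier_vec (nc1+nc2)" using a mat_kernel_carrier[OF A] by auto
      hence "a = vec_first a nc1 @\<^sub>v vec_last a nc2" (is "_ = ?b @\<^sub>v ?d") by simp
      also have "... = padr nc2 ?b + padl nc1 ?d" by auto
      finally have 1: "a = padr nc2 ?b + padl nc1 ?d".
      have subkernel: "?b \<in> mat_kernel B" "?d \<in> mat_kernel D"
        using mat_kernel_split_gen[OF B D] a Adef by auto
      hence "?b \<in> span nc1 baseB"
        using bB unfolding KB.Ker.basis_def using KB.span_same by auto
      hence "padr nc2 ?b \<in> padr nc2 ` span nc1 baseB" by auto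
      also have "padr nc2 ` span nc1 baseB = span (nc1+nc2) (padr nc2 ` baseB)"
        using span_pad[OF bBc] by auto
      also have "... \<subseteq> span (nc1+nc2) ?BD" using MN.span_is_monotone by auto
      finally have 2: "padr nc2 ?b \<in> span (nc1+nc2) ?BD".
      have "?d \<in> span nc2 baseD"
        using subkernel bD unfolding KD.Ker.basis_def using KD.span_same by auto
      hence "padl nc1 ?d \<in> padl nc1 ` span nc2 baseD" by auto
      also have "padl nc1 ` span nc2 baseD = span (nc1+nc2) (padl nc1 ` baseD)"
        using span_pad[OF bDc] by auto
      also have "... \<subseteq> span (nc1+nc2) ?BD" using MN.span_is_monotone by auto
      finally have 3: "padl nc1 ?d \<in> span (nc1+nc2) ?BD".
      have "padr nc2 ?b + padl nc1 ?d \<in> span (nc1+nc2) ?BD"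
        using MN.span_add1[OF _ 2 3] BD by auto
      thus "a \<in> span (nc1+nc2) ?BD" using 1 by auto
    qed
    show "KA.Ker.span ?BD \<subseteq> mat_kernel A" using KA.Ker.span_closed[OF BDk] by auto
    have li: "~ lin_dep nc1 baseB" "~ lin_dep nc2 baseD"
      using bB[unfolded KB.Ker.basis_def]
      unfolding KB.lindep_same[OF bBkB]
      using bD[unfolded KD.Ker.basis_def]
      unfolding KD.lindep_same[OF bDkD] by auto
    show "~ KA.Ker.lin_dep ?BD"
      unfolding KA.lindep_same[OF BDk]
      apply(rule padr_padl_lindep) using bBc bDc li by auto
  qed
  hence "KA.dim = card ?BD" using KA.Ker.dim_basis[OF finBD] by auto
  also have "card ?BD = card (padr nc2 ` baseB) + card (padl nc1 ` baseD)"
    apply(rule card_Un_disjoint)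
    using pad_disjoint[OF bBc bB0 bDc] fin_bB fin_bD by auto
  also have "... = card baseB + card baseD"
    using card_image[OF inj_on_subset[OF padr_inj]]
    using card_image[OF inj_on_subset[OF padl_inj]] bBc bDc by auto
  also have "card baseB = KB.dim" using KB.Ker.dim_basis[OF fin_bB] bB by auto
  also have "card baseD = KD.dim" using KD.Ker.dim_basis[OF fin_bD] bD by auto
  finally show ?thesis.
qed

lemma invertible_obtain:
  fixes P :: "'a::field mat"
  assumes "invertible_mat P" "P \<in> carrier_mat n n"
  obtains Q where "Q \<in> carrier_mat n n" "P * Q = 1\<^sub>m n" "Q * P = 1\<^sub>m n"
proof -
  from assms obtain B where 1: "P * B = 1\<^sub>m n" and 2: "B * P = 1\<^sub>m (dim_row B)"
    unfolding invertible_mat_def inverts_mat_def by auto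
  have "dim_col (B * P) = n" using assms(2) by simp
  hence r: "dim_row B = n" using 2 by (metis index_one_mat(3))
  have "dim_col (P * B) = dim_col B" by simp
  hence c: "dim_col B = n" using 1 by (metis index_one_mat(3))
  show ?thesis using that[of B] 1 2 r c by auto
qed

lemma kernel_dim_eq: "kernel_dim A = kernel.dim (dim_col A) A"
  by (simp add: kernel_dim_def)

lemma rank_mult_left:
  fixes A P :: "'a::field mat"
  assumes A: "A \<in> carrier_mat nr nc" and P: "P \<in> carrier_mat nr nr" and inv: "invertible_mat P"
  shows "mat_rank (P * A) = mat_rank A"
proof -
  obtain Q where Q: "Q \<in> carrier_mat nr nr" "P * Q = 1\<^sub>m nr" "Q * P = 1\<^sub>m nr"
    using invertible_obtain[OF inv P] by blast
  have PA: "P * A \<in> carrier_mat nr nc" using A P by auto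
  have k: "mat_kernel (P * A) = mat_kernel A" by (rule mat_kernel_mult_eq[OF A P Q(1) Q(3)])
  have "kernel_dim (P * A) = kernel_dim A"
    unfolding kernel_dim_def using PA A k by simp
  then show ?thesis using mat_rank_nullity[OF A] mat_rank_nullity[OF PA] by simp
qed

lemma rank_mult_right:
  fixes A Q :: "'a::field mat"
  assumes A: "A \<in> carrier_mat nr nc" and Q: "Q \<in> carrier_mat nc nc" and inv: "invertible_mat Q"
  shows "mat_rank (A * Q) = mat_rank A"
proof -
  obtain R where R: "R \<in> carrier_mat nc nc" "Q * R = 1\<^sub>m nc" "R * Q = 1\<^sub>m nc"
    using invertible_obtain[OF inv Q] by blast
  have AQ: "A * Q \<in> carrier_mat nr nc" using A Q by auto
  have "kernel_dim (A * Q) = kernel_dim A"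
    unfolding kernel_dim_def using AQ A Q mat_kernel_dim_mult_eq_right[OF A Q R(1) R(2)] by simp
  then show ?thesis using mat_rank_nullity[OF A] mat_rank_nullity[OF AQ] by simp
qed

lemma rank_one: "mat_rank (1\<^sub>m n :: 'a::field mat) = n"
proof -
  have "kernel_dim (1\<^sub>m n :: 'a mat) = 0"
    unfolding kernel_dim_def using kernel_one_mat(1)[where 'a='a, of n] by simp
  then show ?thesis using mat_rank_nullity[of "1\<^sub>m n :: 'a mat" n n] by simp
qed

lemma rank_block:
  fixes B D :: "'a::field mat"
  assumes B: "B \<in> carrier_mat nr1 nc1" and D: "D \<in> carrier_mat nr2 nc2"
  shows "mat_rank (four_block_mat B (0\<^sub>m nr1 nc2) (0\<^sub>m nr2 nc1) D) = mat_rank B + mat_rank D"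
proof -
  let ?A = "four_block_mat B (0\<^sub>m nr1 nc2) (0\<^sub>m nr2 nc1) D"
  have A: "?A \<in> carrier_mat (nr1+nr2) (nc1+nc2)" using four_block_carrier_mat[OF B D] .
  have "kernel_dim ?A = kernel_dim B + kernel_dim D"
    unfolding kernel_dim_def using kernel_four_block_0_mat_gen[OF refl B D] A B D by simp
  then show ?thesis using mat_rank_nullity[OF A] mat_rank_nullity[OF B] mat_rank_nullity[OF D] by simp
qed

lemma key_rank:
  fixes C :: "('o, 'm) cat" and dM dN :: "'o \<Rightarrow> nat" and M N :: "'m \<Rightarrow> 'k::field mat"
  assumes cat: "category C" and kM: "kC_module C dM M" and kN: "kC_module C dN N"
    and d0: "d0_vanishes C dM M dN N"
    and h: "g1_hom C u v w"
  shows "rk_inv M N (Comp C v w) = rk_inv M N (Comp C w u)"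
proof -
  from d0 obtain T :: "'m \<Rightarrow> 'k mat" where
    T1: "\<And>u. nonid C u \<Longrightarrow> pb_dim C dM dN u = pb_dim C dN dM u \<and>
           T u \<in> carrier_mat (pb_dim C dN dM u) (pb_dim C dM dN u) \<and> invertible_mat (T u)" and
    T2: "\<And>u v w. g1_hom C u v w \<Longrightarrow>
           T v * pb_mat C dM M dN N u v w = pb_mat C dN N dM M u v w * T u"
    unfolding d0_vanishes_def by blast
  from h have nu: "nonid C u" and nv: "nonid C v" and w: "w \<in> Mor C"
    and dw: "Dom C w = Cod C u" and cw: "Cod C w = Dom C v"
    unfolding g1_hom_def by auto
  have u: "u \<in> Mor C" and v: "v \<in> Mor C" using nu nv unfolding nonid_def by auto
  note c = cat[unfolded category_def]
  have vw: "Comp C v w \<in> Mor C" "Dom C (Comp C v w) = Cod C u" "Cod C (Comp C v w) = Cod C v"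
    using c v w dw cw by auto
  have wu: "Comp C w u \<in> Mor C" "Dom C (Comp C w u) = Dom C u" "Cod C (Comp C w u) = Cod C w"
    using c u w dw by auto
  have Mvw: "M (Comp C v w) \<in> carrier_mat (dM (Cod C v)) (dM (Cod C u))"
    using kM vw unfolding kC_module_def by force
  have Nvw: "N (Comp C v w) \<in> carrier_mat (dN (Cod C v)) (dN (Cod C u))"
    using kN vw unfolding kC_module_def by force
  have Mwu: "M (Comp C w u) \<in> carrier_mat (dM (Cod C w)) (dM (Dom C u))"
    using kM wu unfolding kC_module_def by force
  have Nwu: "N (Comp C w u) \<in> carrier_mat (dN (Cod C w)) (dN (Dom C u))"
    using kN wu unfolding kC_module_def by force
  define A where "A = pb_mat C dM M dN N u v w"
  define B where "B = pb_mat C dN N dM M u v w"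
  have A_def': "A = four_block_mat (M (Comp C v w)) (0\<^sub>m (dM (Cod C v)) (dN (Dom C u)))
                    (0\<^sub>m (dN (Cod C w)) (dM (Cod C u))) (N (Comp C w u))"
    unfolding A_def pb_mat_def by simp
  have B_def': "B = four_block_mat (N (Comp C v w)) (0\<^sub>m (dN (Cod C v)) (dM (Dom C u)))
                    (0\<^sub>m (dM (Cod C w)) (dN (Cod C u))) (M (Comp C w u))"
    unfolding B_def pb_mat_def by simp
  have rA: "mat_rank A = mat_rank (M (Comp C v w)) + mat_rank (N (Comp C w u))"
    unfolding A_def' by (rule rank_block[OF Mvw Nwu])
  have rB: "mat_rank B = mat_rank (N (Comp C v w)) + mat_rank (M (Comp C w u))"
    unfolding B_def' by (rule rank_block[OF Nvw Mwu])
  have Ac: "A \<in> carrier_mat (pb_dim C dM dN v) (pb_dim C dM dN u)"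
    unfolding A_def' pb_dim_def using four_block_carrier_mat[OF Mvw Nwu] cw by simp
  have Bc: "B \<in> carrier_mat (pb_dim C dN dM v) (pb_dim C dN dM u)"
    unfolding B_def' pb_dim_def using four_block_carrier_mat[OF Nvw Mwu] cw by simp
  from T1[OF nv] have Tv: "T v \<in> carrier_mat (pb_dim C dM dN v) (pb_dim C dM dN v)" "invertible_mat (T v)"
    by auto
  from T1[OF nu] have Tu: "T u \<in> carrier_mat (pb_dim C dN dM u) (pb_dim C dN dM u)" "invertible_mat (T u)"
    by auto
  have eq: "T v * A = B * T u" unfolding A_def B_def by (rule T2[OF h])
  have "mat_rank A = mat_rank (T v * A)" using rank_mult_left[OF Ac Tv] by simp
  also have "\<dots> = mat_rank (B * T u)" using eq by simp
  also have "\<dots> = mat_rank B" using rank_mult_right[OF Bc Tu] by simp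
  finally have "mat_rank A = mat_rank B" .
  then show ?thesis using rA rB unfolding rk_inv_def by simp
qed

lemma hom_rk:
  fixes C :: "('o, 'm) cat" and dM dN :: "'o \<Rightarrow> nat" and M N :: "'m \<Rightarrow> 'k::field mat"
  assumes cat: "category C" and kM: "kC_module C dM M" and kN: "kC_module C dN N"
    and d0: "d0_vanishes C dM M dN N"
    and h: "g1_hom C u v w"
  shows "rk_inv M N u = rk_inv M N v"
proof -
  note key = key_rank[OF cat kM kN d0]
  from h have nu: "nonid C u" and nv: "nonid C v" and w: "w \<in> Mor C"
    and dw: "Dom C w = Cod C u" and cw: "Cod C w = Dom C v"
    unfolding g1_hom_def by auto
  have u: "u \<in> Mor C" and v: "v \<in> Mor C" using nu nv unfolding nonid_def by auto
  note c = cat[unfolded category_def]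
  show ?thesis
  proof (cases "w \<in> Id C ` Obj C")
    case True
    then obtain x where x: "x \<in> Obj C" "w = Id C x" by auto
    have "x = Cod C u" using c x dw by auto
    moreover have "x = Dom C v" using c x cw by auto
    ultimately show ?thesis using key[OF h] c u v x by auto
  next
    case False
    hence nw: "nonid C w" using w unfolding nonid_def by auto
    have h1: "g1_hom C u w (Id C (Cod C u))" unfolding g1_hom_def using nu nw c u dw by auto
    have h2: "g1_hom C w v (Id C (Cod C w))" unfolding g1_hom_def using nw nv c w cw by auto
    show ?thesis using key[OF h1] key[OF h2] c u v w dw cw by auto
  qed
qed


theorem proposition4p4:
  fixes C :: "('o, 'm) cat"
    and dM dN :: "'o \<Rightarrow> nat"
    and M N :: "'m \<Rightarrow> 'k::field mat"
    and S :: "'m set"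
  assumes "category C"
    and "no_id_composites C"
    and "kC_module C dM M"
    and "kC_module C dN N"
    and "d0_vanishes C dM M dN N"
    and "line_component C S"
  shows "(\<forall>u\<in>S. \<forall>v\<in>S. rk_inv M N u = rk_inv M N v) \<and>
         (\<forall>x\<in>Dom C ` S \<union> Cod C ` S. \<forall>y\<in>Dom C ` S \<union> Cod C ` S.
            rk_inv M N (Id C x) = rk_inv M N (Id C y))"
proof -
  note cat = assms(1) and kM = assms(3) and kN = assms(4) and d0 = assms(5)
  have mo0: "\<forall>f\<in>Mor C. Dom C f \<in> Obj C \<and> Cod C f \<in> Obj C"
    using cat unfolding category_def by (rule conjunct1)
  have io0: "\<forall>x\<in>Obj C. Id C x \<in> Mor C \<and> Dom C (Id C x) = x \<and> Cod C (Id C x) = x"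
    using cat unfolding category_def by (rule conjunct1[OF conjunct2])
  have mo: "\<And>f. f \<in> Mor C \<Longrightarrow> Dom C f \<in> Obj C \<and> Cod C f \<in> Obj C"
    using mo0 by blast
  have io: "\<And>x. x \<in> Obj C \<Longrightarrow> Dom C (Id C x) = x \<and> Cod C (Id C x) = x"
    using io0 by blast
  from assms(6) obtain u0 where u0: "nonid C u0" and S: "S = {v. (g1_adj C)\<^sup>*\<^sup>* u0 v}"
    unfolding line_component_def by blast
  define del where "del x = int (dM x) - int (dN x)" for x
  have dnon: "del (Cod C u) = del (Dom C u)" if "nonid C u" for u
  proof -
    from d0 have "pb_dim C dM dN u = pb_dim C dN dM u"
      unfolding d0_vanishes_def using that by blast
    thus ?thesis unfolding pb_dim_def del_def by simp
  qed
  have dhom: "del (Cod C u) = del (Dom C v)" if h: "g1_hom C u v w" for u v w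
  proof -
    from h have w: "w \<in> Mor C" and dw: "Dom C w = Cod C u" and cw: "Cod C w = Dom C v"
      unfolding g1_hom_def by auto
    show ?thesis
    proof (cases "w \<in> Id C ` Obj C")
      case True
      then obtain x where x: "x \<in> Obj C" "w = Id C x" by auto
      thus ?thesis using io[OF x(1)] dw cw by auto
    next
      case False
      hence "nonid C w" using w unfolding nonid_def by auto
      hence "del (Cod C w) = del (Dom C w)" by (rule dnon)
      thus ?thesis using dw cw by simp
    qed
  qed
  have main: "nonid C v \<and> rk_inv M N v = rk_inv M N u0 \<and> del (Dom C v) = del (Dom C u0)
      \<and> del (Cod C v) = del (Dom C u0)" if "(g1_adj C)\<^sup>*\<^sup>* u0 v" for v
    using that
  proof (induction rule: rtranclp_induct)
    case base
    then show ?case using u0 dnon by auto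
  next
    case (step y z)
    from step.hyps(2) consider w where "g1_hom C y z w" | w where "g1_hom C z y w"
      unfolding g1_adj_def by blast
    then show ?case
    proof cases
      case 1
      have nz: "nonid C z" using 1 unfolding g1_hom_def by auto
      have r: "rk_inv M N z = rk_inv M N u0" using step.IH hom_rk[OF cat kM kN d0 1] by simp
      have "del (Dom C z) = del (Dom C u0) \<and> del (Cod C z) = del (Dom C u0)"
        using step.IH dhom[OF 1] dnon[OF nz] by linarith
      then show ?thesis using r nz by blast
    next
      case 2
      have nz: "nonid C z" using 2 unfolding g1_hom_def by auto
      have r: "rk_inv M N z = rk_inv M N u0" using step.IH hom_rk[OF cat kM kN d0 2] by simp
      have "del (Dom C z) = del (Dom C u0) \<and> del (Cod C z) = del (Dom C u0)"
        using step.IH dhom[OF 2] dnon[OF nz] by linarith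
      then show ?thesis using r nz by blast
    qed
  qed
  have idr: "rk_inv M N (Id C x) = del (Dom C u0)" if "x \<in> Dom C ` S \<union> Cod C ` S" for x
  proof -
    from that obtain v where v: "v \<in> S" and x: "x = Dom C v \<or> x = Cod C v" by blast
    have vS: "(g1_adj C)\<^sup>*\<^sup>* u0 v" using v unfolding S by simp
    have m1: "nonid C v" and m2: "del (Dom C v) = del (Dom C u0)" and m3: "del (Cod C v) = del (Dom C u0)"
      using main[OF vS] by blast+
    have "v \<in> Mor C" using m1 unfolding nonid_def by blast
    hence xo: "x \<in> Obj C" using mo x by blast
    have eM: "M (Id C x) = 1\<^sub>m (dM x)"
      using kM xo unfolding kC_module_def by blast
    have eN: "N (Id C x) = 1\<^sub>m (dN x)"
      using kN xo unfolding kC_module_def by blast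
    have "rk_inv M N (Id C x) = del x"
      unfolding rk_inv_def del_def eM eN rank_one by (rule refl)
    moreover have "del x = del (Dom C u0)" using x m2 m3 by blast
    ultimately show ?thesis by simp
  qed
  have r1: "\<forall>u\<in>S. \<forall>v\<in>S. rk_inv M N u = rk_inv M N v"
  proof (intro ballI)
    fix u v assume u: "u \<in> S" and v: "v \<in> S"
    have "rk_inv M N u = rk_inv M N u0" using main[of u] u unfolding S by blast
    moreover have "rk_inv M N v = rk_inv M N u0" using main[of v] v unfolding S by blast
    ultimately show "rk_inv M N u = rk_inv M N v" by simp
  qed
  have r2: "\<forall>x\<in>Dom C ` S \<union> Cod C ` S. \<forall>y\<in>Dom C ` S \<union> Cod C ` S.
            rk_inv M N (Id C x) = rk_inv M N (Id C y)"
  proof (intro ballI)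
    fix x y assume x: "x \<in> Dom C ` S \<union> Cod C ` S" and y: "y \<in> Dom C ` S \<union> Cod C ` S"
    show "rk_inv M N (Id C x) = rk_inv M N (Id C y)" using idr[OF x] idr[OF y] by simp
  qed
  show ?thesis using r1 r2 by (rule conjI)
qed

end
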